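(* Let $G$ be an Abelian group acting on a set $X$. Let $A$ be a nonempty finite subset of $G$ and $Y$ a nonempty finite subset of $X$ with $|A\cdot Y|\leq\alpha|Y|$ for some $\alpha\in\mathbb{R}_{\geq0}$. Then there exists a nonempty subset $Z\subset Y$ such that $|AC\cdot Z|\leq\alpha|C\cdot Z|$ for every finite subset $C$ of $G$.
   Context: $AC=\{ac\mid a\in A,c\in C\}$ and $S\cdot Z=\{s\cdot z\mid s\in S,z\in Z\}$. *)

theory Defs
  imports Complex_Main "HOL-Algebra.Group_Action"
begin

definition act_set :: "('a \<Rightarrow> 'b \<Rightarrow> 'b) \<Rightarrow> 'a set \<Rightarrow> 'b set \<Rightarrow> 'b set" where
  "act_set \<phi> S Z = {\<phi> s z | s z. s \<in> S \<and> z \<in> Z}"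

end

theory Submission
  imports Defs
begin

lemma act_set_insert: "act_set \<phi> (insert x C) Z = act_set \<phi> C Z \<union> \<phi> x ` Z"
  unfolding act_set_def by blast

lemma act_set_empty: "act_set \<phi> {} Z = {}"
  unfolding act_set_def by blast

lemma act_set_finite: "finite S \<Longrightarrow> finite Z \<Longrightarrow> finite (act_set \<phi> S Z)"
proof -
  assume "finite S" "finite Z"
  have "act_set \<phi> S Z = (\<lambda>(s,z). \<phi> s z) ` (S \<times> Z)"
    unfolding act_set_def by auto
  thus ?thesis using \<open>finite S\<close> \<open>finite Z\<close> by simp
qed

lemma act_set_mono: "W \<subseteq> Z \<Longrightarrow> act_set \<phi> S W \<subseteq> act_set \<phi> S Z"
  unfolding act_set_def by blast

theorem mainTheorem14:
  fixes G (structure) and X :: "'b set" and \<phi> :: "'a \<Rightarrow> 'b \<Rightarrow> 'b"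
    and A :: "'a set" and Y :: "'b set" and \<alpha> :: real
  assumes "comm_group G" and "group_action G X \<phi>"
    and "A \<subseteq> carrier G" and "finite A" and "A \<noteq> {}"
    and "Y \<subseteq> X" and "finite Y" and "Y \<noteq> {}"
    and "\<alpha> \<ge> 0"
    and "real (card (act_set \<phi> A Y)) \<le> \<alpha> * real (card Y)"
  shows "\<exists>Z. Z \<subseteq> Y \<and> Z \<noteq> {} \<and>
           (\<forall>C. C \<subseteq> carrier G \<and> finite C \<longrightarrow>
              real (card (act_set \<phi> (A <#> C) Z)) \<le> \<alpha> * real (card (act_set \<phi> C Z)))"
proof -
  interpret ga: group_action G X \<phi> by fact
  interpret cg: comm_group G by fact
  define f where "f = (\<lambda>Z. real (card (act_set \<phi> A Z)) / real (card Z))"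
  define S where "S = {Z. Z \<subseteq> Y \<and> Z \<noteq> {}}"
  have "finite S" unfolding S_def using assms(7) by simp
  moreover have "S \<noteq> {}" unfolding S_def using assms(8) by blast
  ultimately obtain Z where "Z \<in> S" and Zmin: "\<And>W. W \<in> S \<Longrightarrow> f Z \<le> f W"
    using ex_is_arg_min_if_finite[of S f] unfolding is_arg_min_def by force
  define K where "K = f Z"
  have ZY: "Z \<subseteq> Y" "Z \<noteq> {}" using \<open>Z \<in> S\<close> S_def by auto
  have ZX: "Z \<subseteq> X" using ZY assms(6) by blast
  have finZ: "finite Z" using ZY assms(7) finite_subset by blast
  have cZpos: "real (card Z) > 0" using finZ ZY by auto
  have K0: "K \<ge> 0" unfolding K_def f_def by simp
  have Kal: "K \<le> \<alpha>"
  proof -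
    have "K \<le> f Y" unfolding K_def using Zmin[of Y] S_def assms(8) by auto
    also have "f Y \<le> \<alpha>" unfolding f_def using assms(10) assms(7) assms(8)
      by (simp add: divide_le_eq card_gt_0_iff)
    finally show ?thesis .
  qed
  have KZ: "real (card (act_set \<phi> A Z)) = K * real (card Z)"
    unfolding K_def f_def using cZpos by simp
  have KW: "K * real (card W) \<le> real (card (act_set \<phi> A W))" if "W \<subseteq> Z" for W
  proof (cases "W = {}")
    case True thus ?thesis by simp
  next
    case False
    have fin: "finite W" using that finZ finite_subset by blast
    hence "real (card W) > 0" using False by auto
    moreover have "K \<le> f W" unfolding K_def using Zmin[of W] S_def that ZY False by auto
    ultimately show ?thesis unfolding f_def by (simp add: le_divide_eq)
  qed
  have AZX: "act_set \<phi> A Z \<subseteq> X"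
    unfolding act_set_def using ZX assms(3) ga.element_image by blast
  have main: "C \<subseteq> carrier G \<Longrightarrow> real (card (act_set \<phi> (A <#> C) Z)) \<le> K * real (card (act_set \<phi> C Z))"
    if "finite C" for C
    using that
  proof (induction C rule: finite_induct)
    case empty
    thus ?case by (simp add: act_set_empty set_mult_def)
  next
    case (insert x C)
    have xG: "x \<in> carrier G" and CG: "C \<subseteq> carrier G" using insert.prems by auto
    have IH: "real (card (act_set \<phi> (A <#> C) Z)) \<le> K * real (card (act_set \<phi> C Z))"
      using insert.IH CG by blast
    have e1: "act_set \<phi> (A <#> insert x C) Z = act_set \<phi> (A <#> C) Z \<union> \<phi> x ` act_set \<phi> A Z"
    proof -
      have "\<phi> (a \<otimes> x) z = \<phi> x (\<phi> a z)" if "a \<in> A" "z \<in> Z" for a z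
        using that assms(3) xG ZX cg.m_comm ga.composition_rule by (metis subsetD)
      note cm = this
      show ?thesis
      proof (rule equalityI; rule subsetI)
        fix y assume "y \<in> act_set \<phi> (A <#> insert x C) Z"
        then obtain a k z where "a \<in> A" "k \<in> insert x C" "z \<in> Z" "y = \<phi> (a \<otimes> k) z"
          unfolding act_set_def set_mult_def by auto
        thus "y \<in> act_set \<phi> (A <#> C) Z \<union> \<phi> x ` act_set \<phi> A Z"
        proof (cases "k = x")
          case True
          have "\<phi> a z \<in> act_set \<phi> A Z" unfolding act_set_def
            using \<open>a \<in> A\<close> \<open>z \<in> Z\<close> by blast
          moreover have "y = \<phi> x (\<phi> a z)" using True \<open>a \<in> A\<close> \<open>z \<in> Z\<close> \<open>y = _\<close> cm by simp
          ultimately show ?thesis by blast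
        next
          case False
          hence "a \<otimes> k \<in> A <#> C" using \<open>a \<in> A\<close> \<open>k \<in> insert x C\<close>
            unfolding set_mult_def by auto
          thus ?thesis using \<open>z \<in> Z\<close> \<open>y = _\<close> unfolding act_set_def by auto
        qed
      next
        fix y assume "y \<in> act_set \<phi> (A <#> C) Z \<union> \<phi> x ` act_set \<phi> A Z"
        thus "y \<in> act_set \<phi> (A <#> insert x C) Z"
        proof
          assume "y \<in> act_set \<phi> (A <#> C) Z"
          moreover have "A <#> C \<subseteq> A <#> insert x C" by (rule mono_set_mult) auto
          ultimately show ?thesis using act_set_def by (smt (verit) mem_Collect_eq subsetD)
        next
          assume "y \<in> \<phi> x ` act_set \<phi> A Z"
          then obtain a z where "a \<in> A" "z \<in> Z" "y = \<phi> x (\<phi> a z)"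
            unfolding act_set_def by auto
          moreover have "a \<otimes> x \<in> A <#> insert x C" using \<open>a \<in> A\<close>
            unfolding set_mult_def by auto
          moreover have "y = \<phi> (a \<otimes> x) z" using cm \<open>a \<in> A\<close> \<open>z \<in> Z\<close> \<open>y = _\<close> by simp
          ultimately show ?thesis unfolding act_set_def by blast
        qed
      qed
    qed
    define ACZ where "ACZ = act_set \<phi> (A <#> C) Z"
    define AZ where "AZ = act_set \<phi> A Z"
    define CZ where "CZ = act_set \<phi> C Z"
    define W where "W = {z \<in> Z. \<phi> x ` act_set \<phi> A {z} \<subseteq> ACZ}"
    define V where "V = {z \<in> Z. \<phi> x z \<in> CZ}"
    have finACZ: "finite ACZ" unfolding ACZ_def
      by (rule act_set_finite) (auto simp: set_mult_def assms(4) insert.hyps finZ)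
    have finAZ: "finite AZ" unfolding AZ_def by (rule act_set_finite) (auto simp: assms(4) finZ)
    have finCZ: "finite CZ" unfolding CZ_def by (rule act_set_finite) (auto simp: insert.hyps finZ)
    have injx: "inj_on (\<phi> x) X" using ga.inj_prop xG by blast
    have WZ: "W \<subseteq> Z" and VZ: "V \<subseteq> Z" unfolding W_def V_def by auto
    have AWX: "act_set \<phi> A W \<subseteq> X" using AZX act_set_mono[OF WZ] by blast
    have VW: "V \<subseteq> W"
    proof
      fix z assume "z \<in> V"
      then obtain c z' where zz: "z \<in> Z" "c \<in> C" "z' \<in> Z" "\<phi> x z = \<phi> c z'"
        unfolding V_def CZ_def act_set_def by blast
      have "\<phi> x (\<phi> a z) \<in> ACZ" if "a \<in> A" for a
      proof -
        have aG: "a \<in> carrier G" using that assms(3) by blast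
        have cG: "c \<in> carrier G" using zz CG by blast
        have "\<phi> x (\<phi> a z) = \<phi> (x \<otimes> a) z" using ga.composition_rule zz ZX aG xG by auto
        also have "\<dots> = \<phi> a (\<phi> x z)" using ga.composition_rule zz ZX aG xG cg.m_comm by auto
        also have "\<dots> = \<phi> a (\<phi> c z')" using zz by simp
        also have "\<dots> = \<phi> (a \<otimes> c) z'" using ga.composition_rule zz ZX aG cG by auto
        finally show ?thesis unfolding ACZ_def act_set_def set_mult_def using that zz by blast
      qed
      thus "z \<in> W" unfolding W_def act_set_def using zz by blast
    qed
    have xAW: "\<phi> x ` act_set \<phi> A W \<subseteq> ACZ \<inter> \<phi> x ` AZ"
      using act_set_mono[OF WZ] unfolding AZ_def W_def act_set_def by blast
    have c1: "card (ACZ \<union> \<phi> x ` AZ) + card (ACZ \<inter> \<phi> x ` AZ) = card ACZ + card AZ"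
      using card_Un_Int[of ACZ "\<phi> x ` AZ"] finACZ finAZ card_image[OF inj_on_subset[OF injx AZX]]
      unfolding AZ_def by simp
    have c2: "card (act_set \<phi> A W) \<le> card (ACZ \<inter> \<phi> x ` AZ)"
      using card_mono[OF _ xAW] finACZ card_image[OF inj_on_subset[OF injx AWX]] by simp
    have lhs: "real (card (act_set \<phi> (A <#> insert x C) Z)) \<le> K * real (card CZ) + K * real (card Z) - K * real (card W)"
    proof -
      have "real (card (act_set \<phi> (A <#> insert x C) Z)) = real (card ACZ) + real (card AZ) - real (card (ACZ \<inter> \<phi> x ` AZ))"
        using e1 c1 unfolding ACZ_def AZ_def by (metis add_diff_cancel_right' of_nat_add)
      also have "\<dots> \<le> real (card ACZ) + real (card AZ) - real (card (act_set \<phi> A W))"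
        using c2 by simp
      finally show ?thesis using IH KZ KW[OF WZ] unfolding ACZ_def AZ_def CZ_def by linarith
    qed
    have e2: "act_set \<phi> (insert x C) Z = CZ \<union> \<phi> x ` Z" unfolding CZ_def by (rule act_set_insert)
    have i2: "CZ \<inter> \<phi> x ` Z = \<phi> x ` V" unfolding V_def by blast
    have c3: "card (CZ \<union> \<phi> x ` Z) + card V = card CZ + card Z"
      using card_Un_Int[of CZ "\<phi> x ` Z"] finCZ finZ i2
        card_image[OF inj_on_subset[OF injx ZX]] card_image[OF inj_on_subset[OF injx]] VZ ZX
      by (metis finite_imageI subset_trans)
    have "card V \<le> card W" using card_mono[OF _ VW] WZ finZ finite_subset by blast
    hence "K * real (card V) \<le> K * real (card W)" using K0 by (simp add: mult_left_mono)
    moreover have eq: "real (card (act_set \<phi> (insert x C) Z)) = real (card CZ) + real (card Z) - real (card V)"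
      using e2 c3 by (metis add_diff_cancel_right' of_nat_add)
    moreover have "K * real (card (act_set \<phi> (insert x C) Z)) = K * real (card CZ) + K * real (card Z) - K * real (card V)"
      unfolding eq by (simp add: right_diff_distrib distrib_left)
    ultimately show ?case using lhs by linarith
  qed
  show ?thesis
  proof (intro exI conjI allI impI)
    show "Z \<subseteq> Y" "Z \<noteq> {}" using ZY by auto
    fix C assume "C \<subseteq> carrier G \<and> finite C"
    hence "real (card (act_set \<phi> (A <#> C) Z)) \<le> K * real (card (act_set \<phi> C Z))" using main by blast
    also have "\<dots> \<le> \<alpha> * real (card (act_set \<phi> C Z))" using Kal by (simp add: mult_right_mono)
    finally show "real (card (act_set \<phi> (A <#> C) Z)) \<le> \<alpha> * real (card (act_set \<phi> C Z))" .
  qed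
qed

end
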